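(* Let $q\ge 4$ and $t\ge 1$ be integers and let $M$ be a matroid with $\epsilon(M)\ge \frac{q^{r(M)}-1}{q-1}$ and $r(M)\ge 3t$. If $M$ is not round, then either $M$ has a $U_{2,q^2+2}$-minor or there is a round restriction $N$ of $M$ such that $r(N)\ge t$ and $\epsilon(N)>\frac{q^{r(N)}-1}{q-1}$.
   Context: A matroid $M$ is round if $E(M)$ cannot be partitioned into two sets each of rank less than $r(M)$. A point is a rank-$1$ flat and $\epsilon(M)$ is the number of points of $M$. $U_{2,m}$ is the uniform matroid of rank $2$ on $m$ elements. *)

theory Defs
  imports Complex_Main
begin

definition matroid :: "'a set \<Rightarrow> ('a set \<Rightarrow> bool) \<Rightarrow> bool" where
  "matroid E indep \<longleftrightarrow>
     finite E \<and> indep {} \<and> (\<forall>I. indep I \<longrightarrow> I \<subseteq> E) \<and>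
     (\<forall>I J. indep J \<and> I \<subseteq> J \<longrightarrow> indep I) \<and>
     (\<forall>I J. indep I \<and> indep J \<and> card I < card J \<longrightarrow> (\<exists>e \<in> J - I. indep (insert e I)))"

definition rk :: "('a set \<Rightarrow> bool) \<Rightarrow> 'a set \<Rightarrow> nat" where
  "rk indep X = Max {card I | I. I \<subseteq> X \<and> indep I}"

definition cl :: "'a set \<Rightarrow> ('a set \<Rightarrow> bool) \<Rightarrow> 'a set \<Rightarrow> 'a set" where
  "cl E indep X = {e \<in> E. rk indep (insert e X) = rk indep X}"

definition flat :: "'a set \<Rightarrow> ('a set \<Rightarrow> bool) \<Rightarrow> 'a set \<Rightarrow> bool" where
  "flat E indep F \<longleftrightarrow> F \<subseteq> E \<and> cl E indep F = F"

definition eps :: "'a set \<Rightarrow> ('a set \<Rightarrow> bool) \<Rightarrow> nat" where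
  "eps E indep = card {F. flat E indep F \<and> rk indep F = 1}"

definition round :: "'a set \<Rightarrow> ('a set \<Rightarrow> bool) \<Rightarrow> bool" where
  "round E indep \<longleftrightarrow>
     \<not> (\<exists>X Y. X \<union> Y = E \<and> X \<inter> Y = {} \<and> rk indep X < rk indep E \<and> rk indep Y < rk indep E)"

text \<open>Restriction M|X has ground set X and independence predicate restr indep X.\<close>
definition restr :: "('a set \<Rightarrow> bool) \<Rightarrow> 'a set \<Rightarrow> 'a set \<Rightarrow> bool" where
  "restr indep X = (\<lambda>I. indep I \<and> I \<subseteq> X)"

text \<open>M has a U_{2,m}-minor: there are disjoint C, D \<subseteq> E (contract C, delete D) such that
  the minor M/C\D, whose ground set is E - C - D and whose independent sets are the
  I \<subseteq> E - C - D with r(I \<union> C) = |I| + r(C), is the uniform matroid of rank 2 on m elements.\<close>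
definition has_U2_minor :: "nat \<Rightarrow> 'a set \<Rightarrow> ('a set \<Rightarrow> bool) \<Rightarrow> bool" where
  "has_U2_minor m E indep \<longleftrightarrow>
     (\<exists>C D. C \<subseteq> E \<and> D \<subseteq> E \<and> C \<inter> D = {} \<and> card (E - C - D) = m \<and>
        (\<forall>I. I \<subseteq> E - C - D \<longrightarrow>
             (rk indep (I \<union> C) = card I + rk indep C \<longleftrightarrow> card I \<le> 2)))"

end

theory Submission imports Defs begin

lemma arith1:
  fixes q s d c :: nat
  assumes q4: "q \<ge> 4" and d1: "d \<ge> 1"
    and h: "(real q ^ (s + d) - 1) / (real q - 1) \<le> 2 ^ d * real c"
  shows "(real q ^ s - 1) / (real q - 1) < real c"
proof -
  define Q where "Q = real q"
  have Q4: "Q \<ge> 4" unfolding Q_def using q4 by simp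
  have Q1: "Q - 1 > 0" using Q4 by simp
  have h': "Q ^ (s + d) - 1 \<le> 2 ^ d * real c * (Q - 1)"
    using h Q1 unfolding Q_def[symmetric] by (simp add: pos_divide_le_eq)
  have p4: "(4::real) ^ d \<le> Q ^ d" by (rule power_mono) (use Q4 in simp_all)
  have e4: "(4::real) ^ d = 2 ^ d * 2 ^ d"
    by (simp add: power_mult_distrib[symmetric])
  have t2: "(2::real) ^ d \<ge> 2"
    using power_increasing[OF d1, of "2::real"] by simp
  have "2 ^ d * 2 \<le> (2::real) ^ d * 2 ^ d" by (rule mult_left_mono) (use t2 in simp_all)
  then have Qd: "Q ^ d \<ge> 2 * 2 ^ d" using p4 e4 by linarith
  have Qs: "Q ^ s \<ge> 1" using Q4 by simp
  have QQ: "Q ^ (s + d) = Q ^ s * Q ^ d" by (simp add: power_add)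
  have m1: "Q ^ s * (2 * 2 ^ d) \<le> Q ^ s * Q ^ d" by (rule mult_left_mono[OF Qd]) (use Qs in simp)
  have Q0: "0 \<le> Q ^ s" using Q4 by simp
  have m2: "Q ^ s * 2 ^ d \<ge> 2" using mult_mono[OF Qs t2] Q0 by simp
  have "Q ^ s - 1 < real c * (Q - 1)"
  proof (rule ccontr)
    assume "\<not> Q ^ s - 1 < real c * (Q - 1)"
    then have "real c * (Q - 1) \<le> Q ^ s - 1" by simp
    then have "2 ^ d * (real c * (Q - 1)) \<le> 2 ^ d * (Q ^ s - 1)" by (rule mult_left_mono) simp
    then have "Q ^ s * Q ^ d - 1 \<le> 2 ^ d * Q ^ s - 2 ^ d" using h' QQ by (simp add: algebra_simps)
    then show False using m1 m2 t2 by (simp add: algebra_simps)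
  qed
  then show ?thesis using Q1 unfolding Q_def[symmetric] by (simp add: divide_less_eq)
qed

lemma arith2:
  fixes q R s t c e :: nat
  assumes q4: "q \<ge> 4" and Rt: "R \<ge> 3 * t" and st: "s < t"
    and c: "c < (q ^ 2) ^ s" and ec: "real e \<le> 2 ^ (R - s) * real c"
    and he: "(real q ^ R - 1) / (real q - 1) \<le> real e"
  shows False
proof -
  define m where "m = R - 1 - 2 * s"
  have Rm: "R - 1 = 2 * s + m" unfolding m_def using Rt st by simp
  have dm: "R - s \<le> 2 * m" unfolding m_def using Rt st by simp
  have "(2::nat) ^ (R - s) \<le> 2 ^ (2 * m)" by (rule power_increasing[OF dm]) simp
  also have "\<dots> = 4 ^ m" by (simp add: power_mult)
  also have "\<dots> \<le> q ^ m" by (rule power_mono) (use q4 in simp_all)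
  finally have p: "(2::nat) ^ (R - s) \<le> q ^ m" .
  have "c + 1 \<le> q ^ (2 * s)" using c by (simp add: power_mult)
  then have "2 ^ (R - s) * (c + 1) \<le> q ^ m * q ^ (2 * s)" by (rule mult_mono[OF p]) simp_all
  also have "\<dots> = q ^ (R - 1)" using Rm by (simp add: power_add mult.commute)
  finally have n0: "2 ^ (R - s) * (c + 1) \<le> q ^ (R - 1)" .
  have "(0::nat) < 2 ^ (R - s)" by simp
  moreover have "2 ^ (R - s) * c + 2 ^ (R - s) \<le> q ^ (R - 1)" using n0 by (simp add: distrib_left)
  ultimately have n1: "2 ^ (R - s) * c < q ^ (R - 1)" by linarith
  then have r1: "2 ^ (R - s) * real c < real q ^ (R - 1)"
  proof -
    have "real (2 ^ (R - s) * c) < real (q ^ (R - 1))" using n1 by (simp only: of_nat_less_iff)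
    then show ?thesis by simp
  qed
  define Q where "Q = real q"
  have Q4: "Q \<ge> 4" unfolding Q_def using q4 by simp
  have R1: "R \<ge> 1" using Rt st by simp
  have QR: "Q ^ R = Q * Q ^ (R - 1)" using R1 by (cases R) simp_all
  have Qs: "Q ^ (R - 1) \<ge> 1" using Q4 by simp
  have "(Q - 1) * Q ^ (R - 1) \<le> Q ^ R - 1" using QR Qs by (simp add: algebra_simps)
  then have "Q ^ (R - 1) \<le> (Q ^ R - 1) / (Q - 1)" using Q4 by (simp add: pos_le_divide_eq mult.commute)
  then show False using he ec r1 unfolding Q_def by simp
qed


definition simpleC :: "('a set \<Rightarrow> bool) \<Rightarrow> 'a set \<Rightarrow> 'a set \<Rightarrow> bool" where
  "simpleC indep C S \<longleftrightarrow> (\<forall>e\<in>S. rk indep (insert e C) = Suc (rk indep C)) \<and>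
     (\<forall>e\<in>S. \<forall>f\<in>S. e \<noteq> f \<longrightarrow> rk indep (C \<union> {e,f}) = rk indep C + 2)"

lemma simpleC_sub: "simpleC indep C S \<Longrightarrow> T \<subseteq> S \<Longrightarrow> simpleC indep C T"
  unfolding simpleC_def by blast

lemma simpleC_D1: "simpleC indep C S \<Longrightarrow> e \<in> S \<Longrightarrow> rk indep (insert e C) = Suc (rk indep C)"
  by (simp add: simpleC_def)
lemma simpleC_D2: "simpleC indep C S \<Longrightarrow> e \<in> S \<Longrightarrow> f \<in> S \<Longrightarrow> e \<noteq> f \<Longrightarrow> rk indep (C \<union> {e,f}) = rk indep C + 2"
  by (simp add: simpleC_def)
lemma simpleC_fail: "\<not> simpleC indep C S \<Longrightarrow> \<forall>e\<in>S. rk indep (insert e C) = Suc (rk indep C) \<Longrightarrow>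
   \<exists>y\<in>S. \<exists>z\<in>S. y \<noteq> z \<and> rk indep (C \<union> {y,z}) \<noteq> rk indep C + 2"
  unfolding simpleC_def by blast

locale mat =
  fixes E :: "'a set" and indep :: "'a set \<Rightarrow> bool"
  assumes M: "matroid E indep"
begin

abbreviation r where "r \<equiv> rk indep"

lemma finE: "finite E" using M by (simp add: matroid_def)
lemma indep_empty: "indep {}" using M by (simp add: matroid_def)
lemma indep_sub: "indep I \<Longrightarrow> I \<subseteq> E" using M by (simp add: matroid_def)
lemma indep_down: "indep J \<Longrightarrow> I \<subseteq> J \<Longrightarrow> indep I" using M unfolding matroid_def by blast
lemma augment: "indep I \<Longrightarrow> indep J \<Longrightarrow> card I < card J \<Longrightarrow> \<exists>e \<in> J - I. indep (insert e I)"
  using M unfolding matroid_def by blast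
lemma indep_fin: "indep I \<Longrightarrow> finite I" using indep_sub finE finite_subset by blast

lemma rk_set_fin: "finite {card I | I. I \<subseteq> X \<and> indep I}"
proof -
  have "{card I | I. I \<subseteq> X \<and> indep I} \<subseteq> card ` Pow E" using indep_sub by blast
  then show ?thesis using finE finite_subset by blast
qed

lemma rk_ex: "\<exists>I. I \<subseteq> X \<and> indep I \<and> card I = r X"
proof -
  have ne: "{card I | I. I \<subseteq> X \<and> indep I} \<noteq> {}" using indep_empty by blast
  have "r X \<in> {card I | I. I \<subseteq> X \<and> indep I}"
    unfolding rk_def using Max_in[OF rk_set_fin ne] by simp
  then show ?thesis by auto
qed

lemma rk_ge: "I \<subseteq> X \<Longrightarrow> indep I \<Longrightarrow> card I \<le> r X"
  unfolding rk_def by (rule Max_ge[OF rk_set_fin]) blast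

lemma rk_mono: "X \<subseteq> Y \<Longrightarrow> r X \<le> r Y"
proof -
  assume "X \<subseteq> Y"
  obtain I where I: "I \<subseteq> X" "indep I" "card I = r X" using rk_ex by blast
  have "card I \<le> r Y" using rk_ge[of I Y] I \<open>X \<subseteq> Y\<close> by blast
  then show ?thesis using I by simp
qed

lemma rk_card: "finite X \<Longrightarrow> r X \<le> card X"
proof -
  assume f: "finite X"
  obtain I where I: "I \<subseteq> X" "indep I" "card I = r X" using rk_ex by blast
  have "card I \<le> card X" using card_mono[OF f I(1)] .
  then show ?thesis using I by simp
qed

lemma rk_indep: "indep I \<Longrightarrow> r I = card I"
proof -
  assume i: "indep I"
  have "r I \<le> card I" using rk_card indep_fin[OF i] by blast
  moreover have "card I \<le> r I" using rk_ge[OF _ i] by simp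
  ultimately show ?thesis by simp
qed

lemma rk_empty: "r {} = 0"
  using rk_card[of "{}"] by simp

lemma rk_insert: "r (insert e X) \<le> Suc (r X)"
proof -
  obtain I where I: "I \<subseteq> insert e X" "indep I" "card I = r (insert e X)" using rk_ex by blast
  have "I - {e} \<subseteq> X" using I by auto
  moreover have "indep (I - {e})" using indep_down I by blast
  ultimately have "card (I - {e}) \<le> r X" using rk_ge by blast
  moreover have "card I \<le> Suc (card (I - {e}))"
  proof (cases "e \<in> I")
    case True then show ?thesis using card_Suc_Diff1[OF indep_fin[OF I(2)] True] by simp
  next
    case False then show ?thesis by simp
  qed
  ultimately show ?thesis using I by simp
qed

lemma extend:
  assumes "indep I" "I \<subseteq> X"
  shows "\<exists>J. I \<subseteq> J \<and> J \<subseteq> X \<and> indep J \<and> card J = r X"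
proof -
  have "\<forall>I. indep I \<and> I \<subseteq> X \<and> r X - card I = n \<longrightarrow> (\<exists>J. I \<subseteq> J \<and> J \<subseteq> X \<and> indep J \<and> card J = r X)" for n
  proof (induction n)
    case 0
    show ?case
    proof (intro allI impI)
      fix I assume a: "indep I \<and> I \<subseteq> X \<and> r X - card I = 0"
      then have "card I \<le> r X" using rk_ge by blast
      moreover have "r X \<le> card I" using a by simp
      ultimately show "\<exists>J. I \<subseteq> J \<and> J \<subseteq> X \<and> indep J \<and> card J = r X" using a by auto
    qed
  next
    case (Suc n)
    show ?case
    proof (intro allI impI)
      fix I assume a: "indep I \<and> I \<subseteq> X \<and> r X - card I = Suc n"
      have aI: "indep I" and aX: "I \<subseteq> X" and ar: "r X - card I = Suc n" using a by auto
      obtain K where K: "K \<subseteq> X" "indep K" "card K = r X" using rk_ex by blast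
      have "card I < card K" using ar K by simp
      then obtain e where e: "e \<in> K - I" "indep (insert e I)" using augment[OF aI K(2)] by blast
      have "card (insert e I) = Suc (card I)" using e indep_fin[OF aI] by simp
      then have h: "indep (insert e I) \<and> insert e I \<subseteq> X \<and> r X - card (insert e I) = n"
        using aX ar e K by auto
      obtain J where J: "insert e I \<subseteq> J \<and> J \<subseteq> X \<and> indep J \<and> card J = r X"
        using Suc.IH[rule_format, OF h] by blast
      show "\<exists>J. I \<subseteq> J \<and> J \<subseteq> X \<and> indep J \<and> card J = r X"
        using J by blast
    qed
  qed
  then show ?thesis using assms by blast
qed

lemma submod: "r (X \<union> Y) + r (X \<inter> Y) \<le> r X + r Y"
proof -
  obtain I where I: "I \<subseteq> X \<inter> Y" "indep I" "card I = r (X \<inter> Y)" using rk_ex[of "X \<inter> Y"] by blast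
  have "I \<subseteq> X \<union> Y" using I(1) by blast
  then obtain J where J: "I \<subseteq> J" "J \<subseteq> X \<union> Y" "indep J" "card J = r (X \<union> Y)"
    using extend[OF I(2) \<open>I \<subseteq> X \<union> Y\<close>] by blast
  have fJ: "finite J" using indep_fin[OF J(3)] .
  have iX: "indep (J \<inter> X)" using indep_down[OF J(3), of "J \<inter> X"] by simp
  have iY: "indep (J \<inter> Y)" using indep_down[OF J(3), of "J \<inter> Y"] by simp
  have c1: "card (J \<inter> X) \<le> r X" using rk_ge[OF _ iX] by simp
  have c2: "card (J \<inter> Y) \<le> r Y" using rk_ge[OF _ iY] by simp
  have fX: "finite (J \<inter> X)" and fY: "finite (J \<inter> Y)" using fJ by auto
  have c3: "card (J \<inter> X) + card (J \<inter> Y) = card ((J \<inter> X) \<union> (J \<inter> Y)) + card ((J \<inter> X) \<inter> (J \<inter> Y))"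
    using card_Un_Int[OF fX fY] .
  have c4: "(J \<inter> X) \<union> (J \<inter> Y) = J" using J(2) by blast
  have c5: "I \<subseteq> (J \<inter> X) \<inter> (J \<inter> Y)" using I(1) J(1) by blast
  have c6: "card I \<le> card ((J \<inter> X) \<inter> (J \<inter> Y))"
    using card_mono[OF _ c5] fX by blast
  show ?thesis using I(3) J(4) c1 c2 c3 c4 c6 by simp
qed

lemma cl_lemma:
  assumes "finite T" "\<forall>x\<in>T. r (insert x B) = r B"
  shows "r (B \<union> T) = r B"
  using assms
proof (induction T rule: finite_induct)
  case empty then show ?case by simp
next
  case (insert x F)
  have h: "r (B \<union> F) = r B" using insert by simp
  have hx: "r (insert x B) = r B" using insert by simp
  have e: "(B \<union> F) \<union> insert x B = B \<union> insert x F" by auto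
  have "r (B \<union> insert x F) + r ((B \<union> F) \<inter> insert x B) \<le> r (B \<union> F) + r (insert x B)"
    using submod[of "B \<union> F" "insert x B"] unfolding e .
  moreover have "r B \<le> r ((B \<union> F) \<inter> insert x B)" by (rule rk_mono) auto
  moreover have "(B \<union> F) \<union> insert x B = B \<union> insert x F" by auto
  moreover have "r B \<le> r (B \<union> insert x F)" by (rule rk_mono) auto
  ultimately show ?case using h hx by linarith
qed


lemma simpleC_disj: "simpleC indep C T \<Longrightarrow> T \<inter> C = {}"
proof (rule ccontr)
  assume a: "simpleC indep C T" "T \<inter> C \<noteq> {}"
  then obtain x where x: "x \<in> T" "x \<in> C" by blast
  then have "insert x C = C" by blast
  moreover have "r (insert x C) = Suc (r C)" using a(1) x(1) unfolding simpleC_def by blast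
  ultimately show False by simp
qed

lemma minor_line:
  assumes C: "C \<subseteq> E" and T: "T \<subseteq> E" and sT: "simpleC indep C T" and fT: "finite T"
    and cT: "card T = m" and rT: "r (C \<union> T) \<le> r C + 2"
  shows "has_U2_minor m E indep"
proof -
  have TC: "T \<inter> C = {}" using simpleC_disj[OF sT] .
  define D where "D = E - C - T"
  have e: "E - C - D = T" using T TC unfolding D_def by blast
  have main: "r (I \<union> C) = card I + r C \<longleftrightarrow> card I \<le> 2" if I: "I \<subseteq> T" for I
  proof -
    have fI: "finite I" using finite_subset[OF I fT] .
    have "I \<union> C \<subseteq> C \<union> T" using I by blast
    then have hub: "r (I \<union> C) \<le> r C + 2" using rk_mono[of "I \<union> C" "C \<union> T"] rT by linarith
    consider "card I = 0" | "card I = 1" | "card I = 2" | "card I \<ge> 3" by arith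
    then show ?thesis
    proof cases
      case 1
      then have "I = {}" using fI by simp
      then show ?thesis by simp
    next
      case 2
      then obtain x where x: "I = {x}" using card_1_singleton_iff[of I] by auto
      have "x \<in> T" using x I by blast
      then have "r (insert x C) = Suc (r C)" using sT unfolding simpleC_def by blast
      moreover have "I \<union> C = insert x C" using x by blast
      ultimately show ?thesis using 2 by simp
    next
      case 3
      then obtain x y where xy: "I = {x, y}" "x \<noteq> y" using card_2_iff[of I] by auto
      have "x \<in> T" "y \<in> T" using xy I by auto
      then have "r (C \<union> {x,y}) = r C + 2" using sT xy(2) unfolding simpleC_def by blast
      moreover have "I \<union> C = C \<union> {x,y}" using xy by blast
      ultimately show ?thesis using 3 by simp
    next
      case 4
      then show ?thesis using hub by simp
    qed
  qed
  show ?thesis unfolding has_U2_minor_def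
  proof (rule exI[of _ C], rule exI[of _ D], intro conjI allI impI)
    show "C \<subseteq> E" by (rule C)
    show "D \<subseteq> E" unfolding D_def by blast
    show "C \<inter> D = {}" unfolding D_def by blast
    show "card (E - C - D) = m" using e cT by simp
  next
    fix I assume "I \<subseteq> E - C - D"
    then have "I \<subseteq> T" using e by simp
    then show "r (I \<union> C) = card I + r C \<longleftrightarrow> card I \<le> 2" by (rule main)
  qed
qed


lemma kung:
  assumes l2: "l \<ge> 2"
  shows "C \<subseteq> E \<Longrightarrow> S \<subseteq> E \<Longrightarrow> simpleC indep C S \<Longrightarrow> r (C \<union> S) \<le> r C + s
         \<Longrightarrow> has_U2_minor (l+2) E indep \<or> card S < l ^ s"
proof (induction s arbitrary: C S)
  case 0
  show ?case
  proof (cases "S = {}")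
    case True then show ?thesis by simp
  next
    case False
    then obtain p where p: "p \<in> S" by blast
    have "r (insert p C) = Suc (r C)" using simpleC_D1[OF "0.prems"(3) p] .
    moreover have "insert p C \<subseteq> C \<union> S" using p by blast
    then have "r (insert p C) \<le> r (C \<union> S)" by (rule rk_mono)
    ultimately show ?thesis using "0.prems"(4) by simp
  qed
next
  case (Suc s)
  note hC = Suc.prems(1) and hS = Suc.prems(2) and sS = Suc.prems(3) and rS = Suc.prems(4)
  show ?case
  proof (cases "S = {}")
    case True then show ?thesis using l2 by simp
  next
    case False
    then obtain p where p: "p \<in> S" by blast
    have fS: "finite S" using finite_subset[OF hS finE] .
    define A where "A = insert p C"
    have sdef1: "r (insert e C) = Suc (r C)" if "e \<in> S" for e
      using simpleC_D1[OF sS that] .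
    have sdef2: "r (C \<union> {e,f}) = r C + 2" if "e \<in> S" "f \<in> S" "e \<noteq> f" for e f
      using simpleC_D2[OF sS that] .
    have rA: "r A = Suc (r C)" unfolding A_def using sdef1[OF p] .
    have nl: "r (insert y A) = Suc (r A)" if y: "y \<in> S - {p}" for y
    proof -
      have "insert y A = C \<union> {p, y}" unfolding A_def by blast
      moreover have "r (C \<union> {p, y}) = r C + 2" using sdef2[of p y] p y by auto
      ultimately show ?thesis using rA by simp
    qed
    define F where "F = {S'. S' \<subseteq> S - {p} \<and> simpleC indep A S'}"
    have FP: "F \<subseteq> Pow S" unfolding F_def by blast
    have fF: "finite F" by (rule finite_subset[OF FP]) (simp add: fS)
    have eF: "{} \<in> F" unfolding F_def simpleC_def by simp
    have ne: "card ` F \<noteq> {}" using eF by blast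
    have "Max (card ` F) \<in> card ` F" using Max_in[OF finite_imageI[OF fF] ne] .
    then obtain S' where cS': "Max (card ` F) = card S'" and S'F: "S' \<in> F" by (rule imageE)
    have S'max: "card X \<le> card S'" if "X \<in> F" for X
    proof -
      have "card X \<in> card ` F" using that by (rule imageI)
      then have "card X \<le> Max (card ` F)" by (rule Max_ge[OF finite_imageI[OF fF]])
      then show ?thesis using cS' by simp
    qed
    have S'sub: "S' \<subseteq> S - {p}" and sS': "simpleC indep A S'" using S'F unfolding F_def by auto
    have fS': "finite S'" using finite_subset[OF _ fS] S'sub by blast
    define N where "N k = {x \<in> S - {p}. r (A \<union> {k, x}) = r (insert k A)}" for k
    have Nsub: "N k \<subseteq> S - {p}" for k unfolding N_def by blast
    have fN: "finite (N k)" for k using finite_subset[OF Nsub fS[THEN finite_Diff]] .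
    have cover: "S - {p} \<subseteq> (\<Union>k\<in>S'. N k)"
    proof
      fix x assume x: "x \<in> S - {p}"
      show "x \<in> (\<Union>k\<in>S'. N k)"
      proof (cases "x \<in> S'")
        case True
        have "A \<union> {x,x} = insert x A" by blast
        then have "x \<in> N x" unfolding N_def using x by simp
        then show ?thesis using True by blast
      next
        case False
        have notF: "insert x S' \<notin> F"
        proof
          assume "insert x S' \<in> F"
          then have "card (insert x S') \<le> card S'" by (rule S'max)
          then show False using False fS' by simp
        qed
        have "insert x S' \<subseteq> S - {p}" using x S'sub by blast
        then have ns: "\<not> simpleC indep A (insert x S')" using notF unfolding F_def by blast
        have nl': "\<forall>e\<in>insert x S'. r (insert e A) = Suc (r A)"
        proof
          fix e assume "e \<in> insert x S'"
          then have "e \<in> S - {p}" using x S'sub by blast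
          then show "r (insert e A) = Suc (r A)" by (rule nl)
        qed
        obtain y z where yz: "y \<in> insert x S'" "z \<in> insert x S'" "y \<noteq> z" "r (A \<union> {y,z}) \<noteq> r A + 2"
          using simpleC_fail[OF ns nl'] by blast
        have pairs: "r (A \<union> {e,f}) = r A + 2" if "e \<in> S'" "f \<in> S'" "e \<noteq> f" for e f
          using simpleC_D2[OF sS' that] .
        obtain k where k: "k \<in> S'" "r (A \<union> {k,x}) \<noteq> r A + 2"
        proof (cases "y = x")
          case True
          then have "z \<in> S'" using yz by blast
          moreover have "A \<union> {y,z} = A \<union> {z,x}" using True by blast
          ultimately show ?thesis using that[of z] yz(4) by simp
        next
          case False
          then have yS: "y \<in> S'" using yz by blast
          show ?thesis
          proof (cases "z = x")
            case True
            then show ?thesis using that[of y] yz(4) yS by (simp add: insert_commute)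
          next
            case False
            then have "z \<in> S'" using yz by blast
            then show ?thesis using pairs[OF yS _ yz(3)] yz(4) by blast
          qed
        qed
        have e1: "A \<union> {k,x} = insert x (insert k A)" by blast
        have up: "r (A \<union> {k,x}) \<le> Suc (r (insert k A))" unfolding e1 by (rule rk_insert)
        have lo: "r (insert k A) \<le> r (A \<union> {k,x})" unfolding e1 by (rule rk_mono) blast
        have "k \<in> S - {p}" using k(1) S'sub by blast
        then have rk: "r (insert k A) = Suc (r A)" by (rule nl)
        have "r (A \<union> {k,x}) = r (insert k A)" using up lo rk k(2) by linarith
        then have "x \<in> N k" unfolding N_def using x by blast
        then show ?thesis using k(1) by blast
      qed
    qed
    have AE: "A \<subseteq> E" unfolding A_def using p hS hC by blast
    show ?thesis
    proof (cases "\<exists>k\<in>S'. card (N k) \<ge> l + 1")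
      case True
      then obtain k where k: "k \<in> S'" "card (N k) \<ge> l + 1" by blast
      have pN: "p \<notin> N k" using Nsub[of k] by blast
      have "card (insert p (N k)) \<ge> l + 2" using pN fN[of k] k(2) by simp
      then obtain T where T: "T \<subseteq> insert p (N k)" "card T = l + 2"
        using obtain_subset_with_card_n[of "l+2" "insert p (N k)"] by blast
      have TS: "T \<subseteq> S" using T(1) Nsub[of k] p by blast
      have fT: "finite T" using finite_subset[OF TS fS] .
      have kS: "k \<in> S" "k \<noteq> p" using k(1) S'sub by auto
      have e2: "insert k A = C \<union> {p,k}" unfolding A_def by blast
      have B: "r (insert k A) = r C + 2" unfolding e2 using sdef2[OF p kS(1)] kS(2) by simp
      have clT: "\<forall>x\<in>T. r (insert x (insert k A)) = r (insert k A)"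
      proof
        fix x assume xT: "x \<in> T"
        show "r (insert x (insert k A)) = r (insert k A)"
        proof (cases "x = p")
          case True
          then have "insert x (insert k A) = insert k A" unfolding A_def by blast
          then show ?thesis by simp
        next
          case False
          then have "x \<in> N k" using xT T(1) by blast
          then have "r (A \<union> {k, x}) = r (insert k A)" unfolding N_def by blast
          moreover have "insert x (insert k A) = A \<union> {k, x}" by blast
          ultimately show ?thesis by simp
        qed
      qed
      have cl: "r (insert k A \<union> T) = r (insert k A)" using cl_lemma[OF fT clT] .
      have "C \<union> T \<subseteq> insert k A \<union> T" unfolding A_def by blast
      then have "r (C \<union> T) \<le> r (insert k A \<union> T)" by (rule rk_mono)
      then have rT: "r (C \<union> T) \<le> r C + 2" using cl B by simp
      have TE: "T \<subseteq> E" using TS hS by blast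
      have "has_U2_minor (l+2) E indep"
        using minor_line[OF hC TE simpleC_sub[OF sS TS] fT T(2) rT] .
      then show ?thesis by simp
    next
      case False
      have Nle: "card (N k) \<le> l" if "k \<in> S'" for k
      proof (rule ccontr)
        assume "\<not> card (N k) \<le> l"
        then have "card (N k) \<ge> l + 1" by simp
        then show False using False that by blast
      qed
      have fU: "finite (\<Union>k\<in>S'. N k)" using finite_UN_I[OF fS' fN] .
      have "card (S - {p}) \<le> card (\<Union>k\<in>S'. N k)" by (rule card_mono[OF fU cover])
      also have "\<dots> \<le> (\<Sum>k\<in>S'. card (N k))" by (rule card_UN_le[OF fS'])
      also have "\<dots> \<le> (\<Sum>k\<in>S'. l)" by (rule sum_mono) (rule Nle)
      also have "\<dots> = l * card S'" by simp
      finally have c1: "card (S - {p}) \<le> l * card S'" .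
      have c2: "card S = Suc (card (S - {p}))" using card_Suc_Diff1[OF fS p] by simp
      have S'E: "S' \<subseteq> E" using S'sub hS by blast
      have "A \<union> S' \<subseteq> C \<union> S" unfolding A_def using p S'sub by blast
      then have "r (A \<union> S') \<le> r (C \<union> S)" by (rule rk_mono)
      then have rk': "r (A \<union> S') \<le> r A + s" using rS rA by simp
      have IH: "has_U2_minor (l+2) E indep \<or> card S' < l ^ s"
        using Suc.IH[OF AE S'E sS' rk'] .
      show ?thesis
      proof (cases "card S' < l ^ s")
        case True
        then have "l * (card S' + 1) \<le> l * l ^ s" by (intro mult_left_mono) auto
        then have "l * card S' + l \<le> l ^ Suc s" by (simp add: algebra_simps)
        then show ?thesis using c1 c2 l2 by simp
      next
        case False
        then show ?thesis using IH by simp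
      qed
    qed
  qed
qed


definition P where "P e = {x \<in> E. r {e, x} = 1}"

lemma flat_point:
  assumes F: "flat E indep F" and rF: "r F = 1" and eF: "e \<in> F" and re: "r {e} = 1"
  shows "F = P e"
proof
  have FE: "F \<subseteq> E" using F unfolding flat_def by blast
  show "F \<subseteq> P e"
  proof
    fix x assume x: "x \<in> F"
    have "{e,x} \<subseteq> F" using x eF by blast
    then have "r {e,x} \<le> 1" using rk_mono[of "{e,x}" F] rF by simp
    moreover have "r {e} \<le> r {e,x}" by (rule rk_mono) blast
    ultimately show "x \<in> P e" unfolding P_def using x FE re by auto
  qed
  show "P e \<subseteq> F"
  proof
    fix x assume x: "x \<in> P e"
    then have xE: "x \<in> E" and rx: "r {e,x} = 1" unfolding P_def by auto
    have s: "r (F \<union> {e,x}) + r (F \<inter> {e,x}) \<le> r F + r {e,x}" by (rule submod)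
    have "{e} \<subseteq> F \<inter> {e,x}" using eF by blast
    then have "r {e} \<le> r (F \<inter> {e,x})" by (rule rk_mono)
    moreover have u: "F \<union> {e,x} = insert x F" using eF by blast
    ultimately have "r (insert x F) \<le> r F" using s rx re by simp
    moreover have "r F \<le> r (insert x F)" by (rule rk_mono) blast
    ultimately have "r (insert x F) = r F" by simp
    then have "x \<in> cl E indep F" unfolding cl_def using xE by simp
    then show "x \<in> F" using F unfolding flat_def by simp
  qed
qed

lemma P_point:
  assumes eE: "e \<in> E" and re: "r {e} = 1"
  shows "e \<in> P e" "r (P e) = 1" "flat E indep (P e)"
proof -
  show eP: "e \<in> P e" unfolding P_def using eE re by simp
  have PE: "P e \<subseteq> E" unfolding P_def by blast
  have fP: "finite (P e)" using finite_subset[OF PE finE] .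
  have "\<forall>x\<in>P e. r (insert x {e}) = r {e}"
  proof
    fix x assume "x \<in> P e"
    then have "r {e,x} = 1" unfolding P_def by simp
    moreover have "insert x {e} = {e,x}" by blast
    ultimately show "r (insert x {e}) = r {e}" using re by simp
  qed
  then have "r ({e} \<union> P e) = r {e}" using cl_lemma[OF fP] by blast
  moreover have "r (P e) \<le> r ({e} \<union> P e)" by (rule rk_mono) blast
  moreover have "r {e} \<le> r (P e)" using eP by (intro rk_mono) blast
  ultimately show rP: "r (P e) = 1" using re by simp
  have "cl E indep (P e) = P e"
  proof
    show "cl E indep (P e) \<subseteq> P e"
    proof
      fix x assume "x \<in> cl E indep (P e)"
      then have xE: "x \<in> E" and rx: "r (insert x (P e)) = r (P e)" unfolding cl_def by auto
      have "{e,x} \<subseteq> insert x (P e)" using eP by blast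
      then have "r {e,x} \<le> 1" using rk_mono[of "{e,x}" "insert x (P e)"] rx rP by simp
      moreover have "r {e} \<le> r {e,x}" by (rule rk_mono) blast
      ultimately show "x \<in> P e" unfolding P_def using xE re by simp
    qed
    show "P e \<subseteq> cl E indep (P e)"
    proof
      fix x assume x: "x \<in> P e"
      then have "insert x (P e) = P e" by blast
      then show "x \<in> cl E indep (P e)" unfolding cl_def using x PE by auto
    qed
  qed
  then show "flat E indep (P e)" unfolding flat_def using PE by simp
qed

lemma simple0: "simpleC indep {} S \<longleftrightarrow> (\<forall>e\<in>S. r {e} = 1) \<and> (\<forall>e\<in>S. \<forall>f\<in>S. e \<noteq> f \<longrightarrow> r {e,f} = 2)"
  unfolding simpleC_def using rk_empty by (simp add: numeral_2_eq_2)

lemma eps_ge: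
  assumes SE: "S \<subseteq> E" and sS: "simpleC indep {} S"
  shows "card S \<le> eps E indep"
proof -
  define Pts where "Pts = {F. flat E indep F \<and> r F = 1}"
  have "Pts \<subseteq> Pow E" unfolding Pts_def flat_def by blast
  then have fPts: "finite Pts" using finite_subset finE by blast
  have s1: "r {e} = 1" if "e \<in> S" for e using sS that unfolding simple0 by blast
  have s2: "r {e,f} = 2" if "e \<in> S" "f \<in> S" "e \<noteq> f" for e f using sS that unfolding simple0 by blast
  have img: "P ` S \<subseteq> Pts"
  proof
    fix F assume "F \<in> P ` S"
    then obtain e where e: "e \<in> S" "F = P e" by blast
    have "e \<in> E" using e SE by blast
    then show "F \<in> Pts" unfolding Pts_def using P_point[OF _ s1[OF e(1)]] e by simp
  qed
  have inj: "inj_on P S"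
  proof (rule inj_onI)
    fix e f assume e: "e \<in> S" and f: "f \<in> S" and eq: "P e = P f"
    show "e = f"
    proof (rule ccontr)
      assume ne: "e \<noteq> f"
      have "f \<in> P f" using P_point(1)[of f] f SE s1[OF f] by blast
      then have "f \<in> P e" using eq by simp
      then have "r {e,f} = 1" unfolding P_def by simp
      then show False using s2[OF e f ne] by simp
    qed
  qed
  have "card S = card (P ` S)" using card_image[OF inj] by simp
  also have "\<dots> \<le> card Pts" by (rule card_mono[OF fPts img])
  finally show ?thesis unfolding eps_def Pts_def .
qed

lemma eps_le: "\<exists>S. S \<subseteq> E \<and> simpleC indep {} S \<and> card S = eps E indep"
proof -
  define Pts where "Pts = {F. flat E indep F \<and> r F = 1}"
  have ex: "\<exists>e. e \<in> F \<and> r {e} = 1" if "F \<in> Pts" for F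
  proof -
    obtain I where I: "I \<subseteq> F" "indep I" "card I = r F" using rk_ex[of F] by blast
    have "card I = 1" using I that unfolding Pts_def by simp
    then obtain e where "I = {e}" using card_1_singleton_iff[of I] by auto
    then show ?thesis using I rk_indep[OF I(2)] by auto
  qed
  define g where "g F = (SOME e. e \<in> F \<and> r {e} = 1)" for F
  have g: "g F \<in> F \<and> r {g F} = 1" if "F \<in> Pts" for F
    unfolding g_def using someI_ex[OF ex[OF that]] .
  have gP: "F = P (g F)" if "F \<in> Pts" for F
    using flat_point[of F "g F"] g[OF that] that unfolding Pts_def by blast
  have gE: "g F \<in> E" if "F \<in> Pts" for F
    using g[OF that] that unfolding Pts_def flat_def by blast
  have inj: "inj_on g Pts"
  proof (rule inj_onI)
    fix F G assume "F \<in> Pts" "G \<in> Pts" "g F = g G"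
    then show "F = G" using gP by metis
  qed
  define S where "S = g ` Pts"
  have SE: "S \<subseteq> E" unfolding S_def using gE by blast
  have "simpleC indep {} S" unfolding simple0
  proof (intro conjI ballI impI)
    fix e assume "e \<in> S"
    then show "r {e} = 1" unfolding S_def using g by blast
  next
    fix e f assume e: "e \<in> S" and f: "f \<in> S" and ne: "e \<noteq> f"
    obtain F where F: "F \<in> Pts" "e = g F" using e unfolding S_def by blast
    obtain G where G: "G \<in> Pts" "f = g G" using f unfolding S_def by blast
    have "r {e,f} \<le> card {e,f}" by (rule rk_card) simp
    then have le2: "r {e,f} \<le> 2" using ne by simp
    have re: "r {e} = 1" using g[OF F(1)] F(2) by simp
    have ge1: "r {e} \<le> r {e,f}" by (rule rk_mono) blast
    have "r {e,f} \<noteq> 1"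
    proof
      assume "r {e,f} = 1"
      then have "f \<in> P e" unfolding P_def using gE[OF G(1)] G(2) by simp
      then have "f \<in> F" using gP[OF F(1)] F(2) by simp
      then have "F = P f" using flat_point[of F f] F(1) g[OF G(1)] G(2) unfolding Pts_def by blast
      then have "F = G" using gP[OF G(1)] G(2) by simp
      then show False using F G ne by simp
    qed
    then show "r {e,f} = 2" using le2 ge1 re by linarith
  qed
  moreover have "card S = eps E indep" unfolding S_def eps_def Pts_def[symmetric]
    using card_image[OF inj] .
  ultimately show ?thesis using SE by blast
qed

end

lemma restr_matroid:
  assumes M: "matroid E indep" and XE: "X \<subseteq> E"
  shows "matroid X (restr indep X)"
proof -
  interpret mat E indep by (rule mat.intro[OF M])
  have fX: "finite X" using finite_subset[OF XE finE] .
  have 1: "\<forall>I J. (indep J \<and> J \<subseteq> X) \<and> I \<subseteq> J \<longrightarrow> indep I \<and> I \<subseteq> X"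
  proof (intro allI impI)
    fix I J assume a: "(indep J \<and> J \<subseteq> X) \<and> I \<subseteq> J"
    then have "indep I" using indep_down[of J I] by blast
    then show "indep I \<and> I \<subseteq> X" using a by blast
  qed
  have 2: "\<forall>I J. (indep I \<and> I \<subseteq> X) \<and> (indep J \<and> J \<subseteq> X) \<and> card I < card J \<longrightarrow>
      (\<exists>e\<in>J - I. indep (insert e I) \<and> insert e I \<subseteq> X)"
  proof (intro allI impI)
    fix I J assume a: "(indep I \<and> I \<subseteq> X) \<and> (indep J \<and> J \<subseteq> X) \<and> card I < card J"
    then obtain e where e: "e \<in> J - I" "indep (insert e I)" using augment[of I J] by blast
    then show "\<exists>e\<in>J - I. indep (insert e I) \<and> insert e I \<subseteq> X" using a by blast
  qed
  have 0: "\<forall>I. indep I \<and> I \<subseteq> X \<longrightarrow> I \<subseteq> X" by blast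
  have "finite X \<and> (indep {} \<and> {} \<subseteq> X) \<and> (\<forall>I. indep I \<and> I \<subseteq> X \<longrightarrow> I \<subseteq> X) \<and>
     (\<forall>I J. (indep J \<and> J \<subseteq> X) \<and> I \<subseteq> J \<longrightarrow> indep I \<and> I \<subseteq> X) \<and>
     (\<forall>I J. (indep I \<and> I \<subseteq> X) \<and> (indep J \<and> J \<subseteq> X) \<and> card I < card J \<longrightarrow>
      (\<exists>e\<in>J - I. indep (insert e I) \<and> insert e I \<subseteq> X))"
    using fX indep_empty 0 1 2 by blast
  then show ?thesis unfolding matroid_def restr_def .
qed

lemma rk_restr: "Y \<subseteq> X \<Longrightarrow> rk (restr indep X) Y = rk indep Y"
proof -
  assume Y: "Y \<subseteq> X"
  have r: "\<And>I. I \<subseteq> Y \<Longrightarrow> restr indep X I = indep I" using Y unfolding restr_def by blast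
  have "{card I | I. I \<subseteq> Y \<and> restr indep X I} = {card I | I. I \<subseteq> Y \<and> indep I}"
    using r by auto
  then show ?thesis unfolding rk_def by simp
qed

lemma simpleC_restr: "S \<subseteq> X \<Longrightarrow> simpleC (restr indep X) {} S \<longleftrightarrow> simpleC indep {} S"
proof -
  assume S: "S \<subseteq> X"
  have h0: "rk (restr indep X) {} = rk indep {}" by (rule rk_restr) simp
  have h1: "rk (restr indep X) (insert e {}) = rk indep (insert e {})" if "e \<in> S" for e
    by (rule rk_restr) (use S that in blast)
  have h2: "rk (restr indep X) ({} \<union> {e,f}) = rk indep ({} \<union> {e,f})" if "e \<in> S" "f \<in> S" for e f
    by (rule rk_restr) (use S that in blast)
  show ?thesis unfolding simpleC_def using h0 h1 h2 by auto
qed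


context mat
begin

lemma descent:
  "X \<subseteq> E \<Longrightarrow> S \<subseteq> X \<Longrightarrow> simpleC indep {} S \<Longrightarrow>
   \<exists>X' S'. X' \<subseteq> X \<and> S' \<subseteq> X' \<and> simpleC indep {} S' \<and> round X' (restr indep X') \<and>
     card S \<le> 2 ^ (r X - r X') * card S' \<and> (\<not> round X (restr indep X) \<longrightarrow> r X' < r X)"
proof (induction "r X" arbitrary: X S rule: less_induct)
  case less
  note XE = less.prems(1) and SX = less.prems(2) and sS = less.prems(3)
  show ?case
  proof (cases "round X (restr indep X)")
    case True
    have "X \<subseteq> X \<and> S \<subseteq> X \<and> simpleC indep {} S \<and> round X (restr indep X) \<and>
     card S \<le> 2 ^ (r X - r X) * card S \<and> (\<not> round X (restr indep X) \<longrightarrow> r X < r X)"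
      using True SX sS by simp
    then show ?thesis by blast
  next
    case False
    then obtain A B where AB: "A \<union> B = X" "A \<inter> B = {}"
      "rk (restr indep X) A < rk (restr indep X) X" "rk (restr indep X) B < rk (restr indep X) X"
      unfolding round_def by blast
    have AX: "A \<subseteq> X" and BX: "B \<subseteq> X" using AB(1) by auto
    have rA: "r A < r X" using AB(3) rk_restr[OF AX] rk_restr[of X X] by simp
    have rB: "r B < r X" using AB(4) rk_restr[OF BX] rk_restr[of X X] by simp
    have fS: "finite S" using finite_subset[OF SX finite_subset[OF XE finE]] .
    have SU: "S = (S \<inter> A) \<union> (S \<inter> B)" using SX AB(1) by blast
    have "card ((S \<inter> A) \<union> (S \<inter> B)) = card (S \<inter> A) + card (S \<inter> B)"
      by (rule card_Un_disjoint) (use fS AB(2) in auto)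
    then have cS: "card S = card (S \<inter> A) + card (S \<inter> B)" using SU by simp
    obtain Z where Z: "Z \<subseteq> X" "r Z < r X" "card S \<le> 2 * card (S \<inter> Z)"
    proof (cases "card (S \<inter> B) \<le> card (S \<inter> A)")
      case True
      then show ?thesis using that[OF AX rA] cS by simp
    next
      case False
      then show ?thesis using that[OF BX rB] cS by simp
    qed
    have ZE: "Z \<subseteq> E" using Z(1) XE by blast
    have SZ: "S \<inter> Z \<subseteq> Z" by blast
    have sSZ: "simpleC indep {} (S \<inter> Z)" using simpleC_sub[OF sS] by blast
    obtain X' S' where D: "X' \<subseteq> Z" "S' \<subseteq> X'" "simpleC indep {} S'" "round X' (restr indep X')"
      "card (S \<inter> Z) \<le> 2 ^ (r Z - r X') * card S'"
      using less.hyps[OF Z(2) ZE SZ sSZ] by blast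
    have rX': "r X' \<le> r Z" using D(1) by (rule rk_mono)
    have "Suc (r Z - r X') \<le> r X - r X'" using rX' Z(2) by simp
    then have pw: "(2::nat) ^ Suc (r Z - r X') \<le> 2 ^ (r X - r X')" by (rule power_increasing) simp
    have "card S \<le> 2 * (2 ^ (r Z - r X') * card S')" using Z(3) D(5) by simp
    also have "\<dots> = 2 ^ Suc (r Z - r X') * card S'" by simp
    also have "\<dots> \<le> 2 ^ (r X - r X') * card S'" by (rule mult_right_mono[OF pw]) simp
    finally have cc: "card S \<le> 2 ^ (r X - r X') * card S'" .
    have "X' \<subseteq> X \<and> S' \<subseteq> X' \<and> simpleC indep {} S' \<and> round X' (restr indep X') \<and>
     card S \<le> 2 ^ (r X - r X') * card S' \<and> (\<not> round X (restr indep X) \<longrightarrow> r X' < r X)"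
      using D Z cc rX' by auto
    then show ?thesis by blast
  qed
qed

end

theorem lemma2p5:
  fixes q t :: nat and E :: "'a set" and indep :: "'a set \<Rightarrow> bool"
  assumes "matroid E indep"
    and "q \<ge> 4" and "t \<ge> 1"
    and "real (eps E indep) \<ge> (real q ^ rk indep E - 1) / (real q - 1)"
    and "rk indep E \<ge> 3 * t"
    and "\<not> round E indep"
  shows "has_U2_minor (q^2 + 2) E indep \<or>
         (\<exists>X. X \<subseteq> E \<and> round X (restr indep X) \<and> rk (restr indep X) X \<ge> t \<and>
              real (eps X (restr indep X)) > (real q ^ rk (restr indep X) X - 1) / (real q - 1))"
proof -
  interpret mat E indep by (rule mat.intro[OF assms(1)])
  obtain S0 where S0: "S0 \<subseteq> E" "simpleC indep {} S0" "card S0 = eps E indep" using eps_le by blast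
  obtain X Y where XY: "X \<union> Y = E" "X \<inter> Y = {}" "rk indep X < rk indep E" "rk indep Y < rk indep E"
    using assms(6) unfolding round_def by blast
  have XE: "X \<subseteq> E" and YE: "Y \<subseteq> E" using XY(1) by auto
  have "X \<union> Y = E \<and> X \<inter> Y = {} \<and> rk (restr indep E) X < rk (restr indep E) E \<and> rk (restr indep E) Y < rk (restr indep E) E"
    using XY rk_restr[OF XE] rk_restr[OF YE] rk_restr[of E E] by simp
  then have nr: "\<not> round E (restr indep E)" unfolding round_def by blast
  obtain X' S' where D: "X' \<subseteq> E" "S' \<subseteq> X'" "simpleC indep {} S'" "round X' (restr indep X')"
      "card S0 \<le> 2 ^ (rk indep E - rk indep X') * card S'" "rk indep X' < rk indep E"
    using descent[OF subset_refl S0(1) S0(2)] nr by blast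
  define R where "R = rk indep E"
  define s where "s = rk indep X'"
  have ec: "real (eps E indep) \<le> 2 ^ (R - s) * real (card S')"
  proof -
    have "eps E indep \<le> 2 ^ (R - s) * card S'" using D(5) S0(3) unfolding R_def s_def by simp
    then have "real (eps E indep) \<le> real (2 ^ (R - s) * card S')" by (simp only: of_nat_le_iff)
    then show ?thesis by simp
  qed
  have he: "(real q ^ R - 1) / (real q - 1) \<le> real (eps E indep)" using assms(4) unfolding R_def .
  show ?thesis
  proof (cases "t \<le> s")
    case True
    have mX: "matroid X' (restr indep X')" by (rule restr_matroid[OF assms(1) D(1)])
    interpret N: mat X' "restr indep X'" by (rule mat.intro[OF mX])
    have sS': "simpleC (restr indep X') {} S'" using simpleC_restr[OF D(2)] D(3) by simp
    have cE: "card S' \<le> eps X' (restr indep X')" by (rule N.eps_ge[OF D(2) sS'])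
    have rkX: "rk (restr indep X') X' = s" unfolding s_def by (rule rk_restr) simp
    have sR: "s < R" using D(6) unfolding R_def s_def .
    have Rsd: "R = s + (R - s)" using sR by simp
    have "(real q ^ (s + (R - s)) - 1) / (real q - 1) \<le> 2 ^ (R - s) * real (card S')"
      using he ec Rsd by simp
    moreover have d1: "R - s \<ge> 1" using sR by simp
    ultimately have "(real q ^ s - 1) / (real q - 1) < real (card S')"
      using arith1[OF assms(2) d1] by blast
    also have "\<dots> \<le> real (eps X' (restr indep X'))" using cE by simp
    finally have "(real q ^ rk (restr indep X') X' - 1) / (real q - 1) < real (eps X' (restr indep X'))"
      using rkX by simp
    then show ?thesis using D(1) D(4) rkX True by blast
  next
    case False
    then have st: "s < t" by simp
    have "(4::nat) ^ 2 \<le> q ^ 2" using power_mono[OF assms(2), of 2] by simp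
    then have l2: "q ^ 2 \<ge> (2::nat)" by simp
    have S'E: "S' \<subseteq> E" using D(1) D(2) by blast
    have "rk indep ({} \<union> S') \<le> rk indep X'" using D(2) by (intro rk_mono) simp
    then have rk': "rk indep ({} \<union> S') \<le> rk indep {} + s" unfolding s_def using rk_empty by simp
    have "has_U2_minor (q ^ 2 + 2) E indep \<or> card S' < (q ^ 2) ^ s"
      by (rule kung[OF l2 _ S'E D(3) rk']) simp
    then show ?thesis
    proof
      assume "card S' < (q ^ 2) ^ s"
      then have False using arith2[OF assms(2) _ st _ ec he] assms(5) unfolding R_def by blast
      then show ?thesis ..
    qed simp
  qed
qed

end
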